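(* Let $\langle \Lambda, \mathcal{S}\rangle$ be a measurable space and let $P_{00}, P_{0+}, P_{+0}, P_{++}$ be four probability measures on it that satisfy the Preparation Uninformativeness Condition, i.e. there is a measure $Q$ dominating all four, with densities $\mu_{xy} = dP_{xy}/dQ$ ($x,y\in\{0,+\}$) such that for all $\lambda\in\Lambda$, $$\mu_{00}(\lambda)\,\mu_{++}(\lambda) = \mu_{0+}(\lambda)\,\mu_{+0}(\lambda).$$ Let $\varepsilon>0$ and suppose there is an $m$-outcome experiment $E$, given by measurable functions $p_k:\Lambda\to[0,1]$, $k\in K$, $|K|=m$, with $\sum_{k\in K}p_k(\lambda)=1$ for all $\lambda$, such that each outcome $k$ is $\varepsilon$-precluded by some $P_{xy}$, i.e. for each $k$ there exist $x,y\in\{0,+\}$ with $\int_\Lambda p_k\,dP_{xy}\le\varepsilon$. Then $$\delta(P_{00},P_{++}) \ge H(P_{00},P_{++})^2 \ge 1-2\sqrt{m\varepsilon}$$ and $$\delta(P_{0+},P_{+0}) \ge H(P_{0+},P_{+0})^2 \ge 1-2\sqrt{m\varepsilon}.$$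
   Context: For probability measures $P,P'$ on $\langle\Lambda,\mathcal{S}\rangle$ with densities $p,q$ with respect to a common dominating measure $\nu$: the total variation distance is $\delta(P,P')=\sup_{A\in\mathcal{S}}|P(A)-P'(A)|=1-\int_\Lambda\min(p,q)\,d\nu$, and the Hellinger distance $H(P,P')$ is defined by $H(P,P')^2=\frac12\int_\Lambda(\sqrt p-\sqrt q)^2\,d\nu = 1-\int_\Lambda\sqrt{pq}\,d\nu$. *)

theory Defs
  imports "HOL-Probability.Probability"
begin

definition tv_dist :: "'a measure \<Rightarrow> 'a measure \<Rightarrow> real" where
  "tv_dist P P' = (SUP A\<in>sets P. \<bar>measure P A - measure P' A\<bar>)"

definition hellinger_sq :: "'a measure \<Rightarrow> ('a \<Rightarrow> real) \<Rightarrow> ('a \<Rightarrow> real) \<Rightarrow> real" where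
  "hellinger_sq \<nu> p q = 1 - (\<integral>x. sqrt (p x * q x) \<partial>\<nu>)"

end

theory Submission
  imports Defs
begin

lemma amgm: fixes a b t :: real assumes "0 \<le> a" "0 \<le> b" "t > 0"
  shows "sqrt (a*b) \<le> (t*a + b/t)/2"
proof -
  have "sqrt (a*b) = sqrt ((t*a)*(b/t))" using assms by simp
  also have "\<dots> \<le> (t*a + b/t)/2" using assms by (intro arith_geo_mean_sqrt) auto
  finally show ?thesis .
qed

lemma amgm2: fixes a b c t :: real assumes "0 \<le> a" "0 \<le> b" "t > 0" "b \<le> c"
  shows "sqrt (a*b) \<le> (t*a + c/t)/2"
proof -
  have "(t*a + b/t)/2 \<le> (t*a + c/t)/2" using assms by (intro divide_right_mono add_left_mono) auto
  then show ?thesis using amgm[OF assms(1-3)] by linarith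
qed

lemma int_bdd:
  fixes Q :: "'a measure" and f g :: "'a \<Rightarrow> real"
  assumes "integrable Q f" "g \<in> borel_measurable Q" "\<And>x. x \<in> space Q \<Longrightarrow> \<bar>g x\<bar> \<le> \<bar>f x\<bar>"
  shows "integrable Q g"
  apply (rule Bochner_Integration.integrable_bound[OF assms(1) assms(2)])
  using assms(3) by (auto intro!: AE_I2)

lemma hell_bound:
  fixes Q :: "'a measure" and a1 a2 a3 a4 :: "'a \<Rightarrow> real"
    and K :: "'k set" and p :: "'k \<Rightarrow> 'a \<Rightarrow> real" and \<epsilon> :: real
  assumes meas[measurable]: "a1 \<in> borel_measurable Q" "a2 \<in> borel_measurable Q"
                "a3 \<in> borel_measurable Q" "a4 \<in> borel_measurable Q"
    and nn: "\<And>x. x \<in> space Q \<Longrightarrow> 0 \<le> a1 x" "\<And>x. x \<in> space Q \<Longrightarrow> 0 \<le> a2 x"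
                "\<And>x. x \<in> space Q \<Longrightarrow> 0 \<le> a3 x" "\<And>x. x \<in> space Q \<Longrightarrow> 0 \<le> a4 x"
    and intg: "integrable Q a1" "integrable Q a2" "integrable Q a3" "integrable Q a4"
    and one: "integral\<^sup>L Q a1 = 1" "integral\<^sup>L Q a2 = 1" "integral\<^sup>L Q a3 = 1" "integral\<^sup>L Q a4 = 1"
    and PUC: "\<And>x. x \<in> space Q \<Longrightarrow> a1 x * a2 x = a3 x * a4 x"
    and eps: "\<epsilon> > 0"
    and finK: "finite K"
    and p_meas[measurable]: "\<And>k. k \<in> K \<Longrightarrow> p k \<in> borel_measurable Q"
    and p_range: "\<And>k x. k \<in> K \<Longrightarrow> x \<in> space Q \<Longrightarrow> 0 \<le> p k x \<and> p k x \<le> 1"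
    and p_sum: "\<And>x. x \<in> space Q \<Longrightarrow> (\<Sum>k\<in>K. p k x) = 1"
    and precl: "\<And>k. k \<in> K \<Longrightarrow> \<exists>a\<in>{a1, a2, a3, a4}. (\<integral>x. p k x * a x \<partial>Q) \<le> \<epsilon>"
  shows "(\<integral>x. sqrt (a1 x * a2 x) \<partial>Q) \<le> 2 * sqrt (real (card K) * \<epsilon>)"
proof -
  have "K \<noteq> {}"
  proof
    assume "K = {}"
    then have "space Q = {}" using p_sum by auto
    then have "integral\<^sup>L Q a1 = 0" by (rule Bochner_Integration.integral_empty)
    then show False using one by simp
  qed
  then have mpos: "real (card K) > 0" using finK by (simp add: card_gt_0_iff)
  define s where "s = sqrt (real (card K) * \<epsilon>)"
  have spos: "s > 0" using mpos eps by (simp add: s_def)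
  have s2: "s * s = real (card K) * \<epsilon>" using mpos eps by (simp add: s_def)
  define t where "t = 2 / s"
  have tpos: "t > 0" using spos by (simp add: t_def)
  define T where "T = (\<lambda>x. a1 x + a2 x + a3 x + a4 x)"
  define S where "S = (\<lambda>x. sqrt (a1 x * a2 x))"
  have T_meas[measurable]: "T \<in> borel_measurable Q" unfolding T_def by measurable
  have S_meas[measurable]: "S \<in> borel_measurable Q" unfolding S_def by measurable
  have T_int: "integrable Q T" unfolding T_def using intg by auto
  have T_one: "integral\<^sup>L Q T = 4" unfolding T_def using intg one by simp
  have Tnn: "\<And>x. x \<in> space Q \<Longrightarrow> 0 \<le> T x" unfolding T_def using nn by fastforce
  have pw: "S x \<le> (t * a x + T x / t)/2" if x: "x \<in> space Q" and a: "a \<in> {a1, a2, a3, a4}" for x a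
  proof -
    note n = nn[OF x]
    have h1: "S x \<le> (t * a1 x + T x / t)/2" unfolding S_def using n tpos by (intro amgm2) (auto simp: T_def)
    have h2: "S x \<le> (t * a2 x + T x / t)/2" unfolding S_def using n tpos
        by (subst mult.commute) (intro amgm2, auto simp: T_def)
    have h3: "S x \<le> (t * a3 x + T x / t)/2" unfolding S_def PUC[OF x] using n tpos
        by (intro amgm2) (auto simp: T_def)
    have h4: "S x \<le> (t * a4 x + T x / t)/2" unfolding S_def PUC[OF x] using n tpos
        by (subst mult.commute) (intro amgm2, auto simp: T_def)
    from a consider "a = a1" | "a = a2" | "a = a3" | "a = a4" by blast
    then show ?thesis using h1 h2 h3 h4 by cases auto
  qed
  have Sle: "\<And>x. x \<in> space Q \<Longrightarrow> \<bar>S x\<bar> \<le> \<bar>T x\<bar>"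
  proof -
    fix x assume x: "x \<in> space Q"
    have "S x \<le> (a1 x + a2 x)/2" unfolding S_def using nn[OF x] by (intro arith_geo_mean_sqrt)
    then show "\<bar>S x\<bar> \<le> \<bar>T x\<bar>" using nn[OF x] by (auto simp: S_def T_def)
  qed
  have S_int: "integrable Q S" by (rule int_bdd[OF T_int S_meas Sle])
  have pS_int: "integrable Q (\<lambda>x. p k x * S x)" if k: "k \<in> K" for k
  proof -
    have [measurable]: "p k \<in> borel_measurable Q" using p_meas[OF k] .
    show ?thesis by (rule int_bdd[OF S_int]) (use p_range[OF k] in \<open>auto simp: abs_mult intro!: mult_left_le_one_le\<close>)
  qed
  have pT_int: "integrable Q (\<lambda>x. p k x * T x)" if k: "k \<in> K" for k
  proof -
    have [measurable]: "p k \<in> borel_measurable Q" using p_meas[OF k] .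
    show ?thesis by (rule int_bdd[OF T_int]) (use p_range[OF k] in \<open>auto simp: abs_mult intro!: mult_left_le_one_le\<close>)
  qed
  have per_k: "(\<integral>x. p k x * S x \<partial>Q) \<le> (t * \<epsilon> + (\<integral>x. p k x * T x \<partial>Q) / t) / 2"
    if k: "k \<in> K" for k
  proof -
    obtain a where a: "a \<in> {a1, a2, a3, a4}" and ae: "(\<integral>x. p k x * a x \<partial>Q) \<le> \<epsilon>"
      using precl[OF k] by blast
    have am[measurable]: "a \<in> borel_measurable Q" and aint: "integrable Q a"
      using a intg by auto
    have [measurable]: "p k \<in> borel_measurable Q" using p_meas[OF k] .
    have pa_int: "integrable Q (\<lambda>x. p k x * a x)"
      by (rule int_bdd[OF aint]) (use p_range[OF k] in \<open>auto simp: abs_mult intro!: mult_left_le_one_le\<close>)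
    have "(\<integral>x. p k x * S x \<partial>Q) \<le> (\<integral>x. (t * (p k x * a x) + (p k x * T x) / t) / 2 \<partial>Q)"
    proof (rule integral_mono[OF pS_int[OF k]])
      show "integrable Q (\<lambda>x. (t * (p k x * a x) + p k x * T x / t) / 2)"
        using pa_int pT_int[OF k] by auto
      fix x assume x: "x \<in> space Q"
      have "p k x * S x \<le> p k x * ((t * a x + T x / t)/2)"
        using pw[OF x a] p_range[OF k x] by (intro mult_left_mono) auto
      then show "p k x * S x \<le> (t * (p k x * a x) + p k x * T x / t) / 2"
        by (simp add: algebra_simps add_divide_distrib)
    qed
    also have "\<dots> = (t * (\<integral>x. p k x * a x \<partial>Q) + (\<integral>x. p k x * T x \<partial>Q) / t) / 2"
      using pa_int pT_int[OF k] by simp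
    also have "\<dots> \<le> (t * \<epsilon> + (\<integral>x. p k x * T x \<partial>Q) / t) / 2"
      using ae tpos by simp
    finally show ?thesis .
  qed
  have "integral\<^sup>L Q S = (\<integral>x. (\<Sum>k\<in>K. p k x * S x) \<partial>Q)"
    by (intro Bochner_Integration.integral_cong) (auto simp: p_sum sum_distrib_right[symmetric])
  also have "\<dots> = (\<Sum>k\<in>K. (\<integral>x. p k x * S x \<partial>Q))"
    using pS_int by (intro Bochner_Integration.integral_sum) auto
  also have "\<dots> \<le> (\<Sum>k\<in>K. (t * \<epsilon> + (\<integral>x. p k x * T x \<partial>Q) / t) / 2)"
    using per_k by (intro sum_mono) auto
  also have "\<dots> = (real (card K) * (t * \<epsilon>) + (\<Sum>k\<in>K. (\<integral>x. p k x * T x \<partial>Q)) / t) / 2"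
    by (simp add: sum.distrib sum_divide_distrib[symmetric] add_divide_distrib)
  also have "(\<Sum>k\<in>K. (\<integral>x. p k x * T x \<partial>Q)) = (\<integral>x. (\<Sum>k\<in>K. p k x * T x) \<partial>Q)"
    using pT_int by (intro Bochner_Integration.integral_sum[symmetric]) auto
  also have "\<dots> = integral\<^sup>L Q T"
    by (intro Bochner_Integration.integral_cong) (auto simp: p_sum sum_distrib_right[symmetric])
  also have "(real (card K) * (t * \<epsilon>) + integral\<^sup>L Q T / t) / 2 = 2 * s"
    using spos s2 by (simp add: T_one t_def field_simps)
  finally show ?thesis by (simp add: S_def s_def)
qed

lemma dens_basic:
  fixes Q :: "'a measure" and \<mu> :: "'a \<Rightarrow> real"
  assumes m: "\<mu> \<in> borel_measurable Q" and nn: "\<And>x. x \<in> space Q \<Longrightarrow> 0 \<le> \<mu> x"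
    and pr: "prob_space (density Q (\<lambda>x. ennreal (\<mu> x)))"
  shows "integrable Q \<mu>" "integral\<^sup>L Q \<mu> = 1"
proof -
  have "emeasure (density Q (\<lambda>x. ennreal (\<mu> x))) (space Q) = 1"
    using prob_space.emeasure_space_1[OF pr] by simp
  moreover have "emeasure (density Q (\<lambda>x. ennreal (\<mu> x))) (space Q)
      = (\<integral>\<^sup>+ x. ennreal (\<mu> x) * indicator (space Q) x \<partial>Q)"
    using m by (intro emeasure_density) auto
  moreover have "(\<integral>\<^sup>+ x. ennreal (\<mu> x) * indicator (space Q) x \<partial>Q) = (\<integral>\<^sup>+ x. ennreal (\<mu> x) \<partial>Q)"
    by (rule nn_integral_cong) (simp add: indicator_def)
  ultimately have e: "(\<integral>\<^sup>+ x. ennreal (\<mu> x) \<partial>Q) = 1" by simp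
  show "integrable Q \<mu>" using m nn e by (intro integrableI_nonneg) auto
  show "integral\<^sup>L Q \<mu> = 1" using m nn e by (subst integral_eq_nn_integral) auto
qed

lemma dens_int:
  fixes Q :: "'a measure" and \<mu> f :: "'a \<Rightarrow> real"
  assumes "\<mu> \<in> borel_measurable Q" "\<And>x. x \<in> space Q \<Longrightarrow> 0 \<le> \<mu> x" "f \<in> borel_measurable Q"
  shows "integral\<^sup>L (density Q (\<lambda>x. ennreal (\<mu> x))) f = (\<integral>x. \<mu> x * f x \<partial>Q)"
  using integral_density[of f Q \<mu>] assms by simp

lemma tv_bound:
  fixes Q :: "'a measure" and a b :: "'a \<Rightarrow> real"
  assumes ma[measurable]: "a \<in> borel_measurable Q" and mb[measurable]: "b \<in> borel_measurable Q"
    and na: "\<And>x. x \<in> space Q \<Longrightarrow> 0 \<le> a x" and nb: "\<And>x. x \<in> space Q \<Longrightarrow> 0 \<le> b x"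
    and pa: "prob_space (density Q (\<lambda>x. ennreal (a x)))"
    and pb: "prob_space (density Q (\<lambda>x. ennreal (b x)))"
  shows "tv_dist (density Q (\<lambda>x. ennreal (a x))) (density Q (\<lambda>x. ennreal (b x))) \<ge> hellinger_sq Q a b"
proof -
  define Pa where "Pa = density Q (\<lambda>x. ennreal (a x))"
  define Pb where "Pb = density Q (\<lambda>x. ennreal (b x))"
  have ia: "integrable Q a" "integral\<^sup>L Q a = 1" using dens_basic[OF ma na pa] by auto
  have ib: "integrable Q b" "integral\<^sup>L Q b = 1" using dens_basic[OF mb nb pb] by auto
  define A where "A = {x\<in>space Q. b x < a x}"
  have A[measurable]: "A \<in> sets Q" unfolding A_def by measurable
  have spa: "space Pa = space Q" "sets Pa = sets Q" by (auto simp: Pa_def)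
  have spb: "space Pb = space Q" "sets Pb = sets Q" by (auto simp: Pb_def)
  have mA: "measure Pa A = (\<integral>x. a x * indicator A x \<partial>Q)"
  proof -
    have "measure Pa A = integral\<^sup>L Pa (indicator A)"
      using A sets.sets_into_space[OF A] by (simp add: spa Int_absorb2)
    also have "\<dots> = (\<integral>x. a x * indicator A x \<partial>Q)" unfolding Pa_def
      by (rule dens_int[OF ma na borel_measurable_indicator[OF A]])
    finally show ?thesis .
  qed
  have mB: "measure Pb A = (\<integral>x. b x * indicator A x \<partial>Q)"
  proof -
    have "measure Pb A = integral\<^sup>L Pb (indicator A)"
      using A sets.sets_into_space[OF A] by (simp add: spb Int_absorb2)
    also have "\<dots> = (\<integral>x. b x * indicator A x \<partial>Q)" unfolding Pb_def
      by (rule dens_int[OF mb nb borel_measurable_indicator[OF A]])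
    finally show ?thesis .
  qed
  have iaA: "integrable Q (\<lambda>x. a x * indicator A x)"
    apply (rule int_bdd[OF ia(1)])
     apply measurable
    by (auto simp: indicator_def)
  have ibA: "integrable Q (\<lambda>x. b x * indicator A x)"
    apply (rule int_bdd[OF ib(1)])
     apply measurable
    by (auto simp: indicator_def)
  have imin: "integrable Q (\<lambda>x. min (a x) (b x))"
    apply (rule int_bdd[OF ia(1)])
     apply measurable
    using na nb by (auto simp: min_def)
  have isq: "integrable Q (\<lambda>x. sqrt (a x * b x))"
  proof (rule int_bdd[of _ "\<lambda>x. a x + b x"])
    show "integrable Q (\<lambda>x. a x + b x)" using ia ib by auto
    fix x assume x: "x \<in> space Q"
    have "sqrt (a x * b x) \<le> (a x + b x)/2" using na[OF x] nb[OF x] by (intro arith_geo_mean_sqrt)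
    then show "\<bar>sqrt (a x * b x)\<bar> \<le> \<bar>a x + b x\<bar>" using na[OF x] nb[OF x] by auto
  qed measurable
  have "measure Pa A - measure Pb A = (\<integral>x. a x * indicator A x - b x * indicator A x \<partial>Q)"
    using iaA ibA mA mB by simp
  also have "\<dots> = (\<integral>x. a x - min (a x) (b x) \<partial>Q)"
    by (intro Bochner_Integration.integral_cong) (auto simp: A_def indicator_def min_def)
  also have "\<dots> = 1 - (\<integral>x. min (a x) (b x) \<partial>Q)"
    using ia imin by simp
  also have "\<dots> \<ge> 1 - (\<integral>x. sqrt (a x * b x) \<partial>Q)"
  proof -
    have "(\<integral>x. min (a x) (b x) \<partial>Q) \<le> (\<integral>x. sqrt (a x * b x) \<partial>Q)"
    proof (rule integral_mono[OF imin isq])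
      fix x assume x: "x \<in> space Q"
      show "min (a x) (b x) \<le> sqrt (a x * b x)"
      proof (cases "a x \<le> b x")
        case True
        then have "a x * a x \<le> a x * b x" using na[OF x] by (intro mult_left_mono)
        then have "sqrt (a x * a x) \<le> sqrt (a x * b x)" by (rule real_sqrt_le_mono)
        then show ?thesis using True na[OF x] by simp
      next
        case False
        then have "b x * b x \<le> a x * b x" using nb[OF x] by (intro mult_right_mono) auto
        then have "sqrt (b x * b x) \<le> sqrt (a x * b x)" by (rule real_sqrt_le_mono)
        then show ?thesis using False nb[OF x] by simp
      qed
    qed
    then show ?thesis by simp
  qed
  finally have d: "hellinger_sq Q a b \<le> \<bar>measure Pa A - measure Pb A\<bar>"
    unfolding hellinger_sq_def by linarith
  have bdd: "bdd_above ((\<lambda>B. \<bar>measure Pa B - measure Pb B\<bar>) ` sets Pa)"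
  proof (rule bdd_aboveI2)
    fix B
    have "measure Pa B \<le> 1" "measure Pb B \<le> 1"
      using prob_space.prob_le_1[OF pa] prob_space.prob_le_1[OF pb] by (auto simp: Pa_def Pb_def)
    then show "\<bar>measure Pa B - measure Pb B\<bar> \<le> 1" by (simp add: abs_le_iff) (smt (verit) measure_nonneg)
  qed
  have "hellinger_sq Q a b \<le> tv_dist Pa Pb"
    unfolding tv_dist_def by (rule cSUP_upper2[OF bdd _ d]) (simp add: spa)
  then show ?thesis by (simp add: Pa_def Pb_def)
qed

theorem theorem2:
  fixes Q :: "'a measure"
    and mu00 mu0p mup0 mupp :: "'a \<Rightarrow> real"
    and P00 P0p Pp0 Ppp :: "'a measure"
    and K :: "'k set" and p :: "'k \<Rightarrow> 'a \<Rightarrow> real" and \<epsilon> :: real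
  assumes meas: "mu00 \<in> borel_measurable Q" "mu0p \<in> borel_measurable Q"
                "mup0 \<in> borel_measurable Q" "mupp \<in> borel_measurable Q"
    and nonneg: "\<And>x. x \<in> space Q \<Longrightarrow> 0 \<le> mu00 x" "\<And>x. x \<in> space Q \<Longrightarrow> 0 \<le> mu0p x"
                "\<And>x. x \<in> space Q \<Longrightarrow> 0 \<le> mup0 x" "\<And>x. x \<in> space Q \<Longrightarrow> 0 \<le> mupp x"
    and P00_def: "P00 = density Q (\<lambda>x. ennreal (mu00 x))"
    and P0p_def: "P0p = density Q (\<lambda>x. ennreal (mu0p x))"
    and Pp0_def: "Pp0 = density Q (\<lambda>x. ennreal (mup0 x))"
    and Ppp_def: "Ppp = density Q (\<lambda>x. ennreal (mupp x))"
    and prob: "prob_space P00" "prob_space P0p" "prob_space Pp0" "prob_space Ppp"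
    and PUC: "\<And>x. x \<in> space Q \<Longrightarrow> mu00 x * mupp x = mu0p x * mup0 x"
    and eps: "\<epsilon> > 0"
    and finK: "finite K"
    and p_meas: "\<And>k. k \<in> K \<Longrightarrow> p k \<in> borel_measurable Q"
    and p_range: "\<And>k x. k \<in> K \<Longrightarrow> x \<in> space Q \<Longrightarrow> 0 \<le> p k x \<and> p k x \<le> 1"
    and p_sum: "\<And>x. x \<in> space Q \<Longrightarrow> (\<Sum>k\<in>K. p k x) = 1"
    and precl: "\<And>k. k \<in> K \<Longrightarrow> \<exists>P\<in>{P00, P0p, Pp0, Ppp}. (\<integral>x. p k x \<partial>P) \<le> \<epsilon>"
  shows "tv_dist P00 Ppp \<ge> hellinger_sq Q mu00 mupp
         \<and> hellinger_sq Q mu00 mupp \<ge> 1 - 2 * sqrt (real (card K) * \<epsilon>)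
         \<and> tv_dist P0p Pp0 \<ge> hellinger_sq Q mu0p mup0
         \<and> hellinger_sq Q mu0p mup0 \<ge> 1 - 2 * sqrt (real (card K) * \<epsilon>)"
proof -
  note m = meas
  have i00: "integrable Q mu00" "integral\<^sup>L Q mu00 = 1" using dens_basic[OF meas(1) nonneg(1)] prob(1) P00_def by auto
  have i0p: "integrable Q mu0p" "integral\<^sup>L Q mu0p = 1" using dens_basic[OF meas(2) nonneg(2)] prob(2) P0p_def by auto
  have ip0: "integrable Q mup0" "integral\<^sup>L Q mup0 = 1" using dens_basic[OF meas(3) nonneg(3)] prob(3) Pp0_def by auto
  have ipp: "integrable Q mupp" "integral\<^sup>L Q mupp = 1" using dens_basic[OF meas(4) nonneg(4)] prob(4) Ppp_def by auto
  have tr: "(\<integral>x. p k x \<partial>density Q (\<lambda>x. ennreal (\<mu> x))) = (\<integral>x. p k x * \<mu> x \<partial>Q)"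
    if "k \<in> K" "\<mu> \<in> borel_measurable Q" "\<And>x. x \<in> space Q \<Longrightarrow> 0 \<le> \<mu> x" for k \<mu>
    using dens_int[OF that(2,3) p_meas[OF that(1)]] by (simp add: mult.commute)
  have pr2: "\<exists>a\<in>{mu00, mupp, mu0p, mup0}. (\<integral>x. p k x * a x \<partial>Q) \<le> \<epsilon>" if k: "k \<in> K" for k
  proof -
    obtain P where P: "P \<in> {P00, P0p, Pp0, Ppp}" "(\<integral>x. p k x \<partial>P) \<le> \<epsilon>" using precl[OF k] by blast
    then consider "P = P00" | "P = P0p" | "P = Pp0" | "P = Ppp" by blast
    then show ?thesis
    proof cases
      case 1
      have "(\<integral>x. p k x * mu00 x \<partial>Q) \<le> \<epsilon>" using P(2) tr[OF k meas(1) nonneg(1)] unfolding 1 P00_def by simp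
      then show ?thesis by blast
    next
      case 2
      have "(\<integral>x. p k x * mu0p x \<partial>Q) \<le> \<epsilon>" using P(2) tr[OF k meas(2) nonneg(2)] unfolding 2 P0p_def by simp
      then show ?thesis by blast
    next
      case 3
      have "(\<integral>x. p k x * mup0 x \<partial>Q) \<le> \<epsilon>" using P(2) tr[OF k meas(3) nonneg(3)] unfolding 3 Pp0_def by simp
      then show ?thesis by blast
    next
      case 4
      have "(\<integral>x. p k x * mupp x \<partial>Q) \<le> \<epsilon>" using P(2) tr[OF k meas(4) nonneg(4)] unfolding 4 Ppp_def by simp
      then show ?thesis by blast
    qed
  qed
  have pr3: "\<exists>a\<in>{mu0p, mup0, mu00, mupp}. (\<integral>x. p k x * a x \<partial>Q) \<le> \<epsilon>" if k: "k \<in> K" for k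
    using pr2[OF k] by blast
  have PUC2: "\<And>x. x \<in> space Q \<Longrightarrow> mu0p x * mup0 x = mu00 x * mupp x" using PUC by simp
  have H1: "(\<integral>x. sqrt (mu00 x * mupp x) \<partial>Q) \<le> 2 * sqrt (real (card K) * \<epsilon>)"
    by (rule hell_bound[OF meas(1,4,2,3) nonneg(1,4,2,3) i00(1) ipp(1) i0p(1) ip0(1)
          i00(2) ipp(2) i0p(2) ip0(2) PUC eps finK p_meas p_range p_sum pr2])
  have H2: "(\<integral>x. sqrt (mu0p x * mup0 x) \<partial>Q) \<le> 2 * sqrt (real (card K) * \<epsilon>)"
    by (rule hell_bound[OF meas(2,3,1,4) nonneg(2,3,1,4) i0p(1) ip0(1) i00(1) ipp(1)
          i0p(2) ip0(2) i00(2) ipp(2) PUC2 eps finK p_meas p_range p_sum pr3])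
  have T1: "tv_dist P00 Ppp \<ge> hellinger_sq Q mu00 mupp"
    using tv_bound[OF meas(1,4) nonneg(1,4)] prob(1,4) P00_def Ppp_def by simp
  have T2: "tv_dist P0p Pp0 \<ge> hellinger_sq Q mu0p mup0"
    using tv_bound[OF meas(2,3) nonneg(2,3)] prob(2,3) P0p_def Pp0_def by simp
  show ?thesis using T1 T2 H1 H2 unfolding hellinger_sq_def by linarith
qed

end
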